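(* Let $C$ and $C'$ be filtered chain complexes with strictly filtration-decreasing differentials, and let $a\in\mathbb{R}$, $\delta>0$. Assume $C^{[a+\delta,a+3\delta)}=C^{[a,a+4\delta)}$ are both two-dimensional, while $C'^{[a,a+4\delta)}=0$. Assume there are chain maps $\phi\colon C\to C'$ and $\psi\colon C'\to C$, both of degree $\epsilon>0$, such that $\psi\phi$ and $\phi\psi$ are homotopic to automorphisms of filtered chain complexes via chain homotopies of degree $\epsilon$. If $\delta>\epsilon>0$, then $C^{[a+\delta,a+3\delta)}$ is a complex generated by two elements $x,y$ with $\partial x=ky$ for some unit $k$.
   Context: For a filtered complex $C$ with action filtration $\ell$, $C^{<a}=\ell^{-1}(-\infty,a)$ and $C^{[a,b)}=C^{<b}/C^{<a}$ is the quotient complex in the action window $[a,b)$. A map has degree $\epsilon$ if it raises action by at most $\epsilon$. An automorphism of filtered chain complexes is a degree-zero chain map with degree-zero inverse. *)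

theory Defs
  imports Complex_Main "HOL-Library.Extended_Real"
begin

text \<open>
  A filtered chain complex over a field 'k: a 'k-vector space (carrier type 'v,
  scalar multiplication s), a linear differential d with d o d = 0, and an action
  filtration l : C -> R u {-infinity} (values in ereal, never +infinity) which is
  non-Archimedean, invariant under nonzero scalars, with l x = -infinity iff x = 0.
  (Ungraded.)
\<close>

definition filtered_complex ::
  "('k::field \<Rightarrow> 'v::ab_group_add \<Rightarrow> 'v) \<Rightarrow> ('v \<Rightarrow> 'v) \<Rightarrow> ('v \<Rightarrow> ereal) \<Rightarrow> bool" where
  "filtered_complex s d l \<longleftrightarrow>
     vector_space s \<and> Vector_Spaces.linear s s d \<and> (\<forall>x. d (d x) = 0) \<and>
     (\<forall>x. l x \<noteq> \<infinity>) \<and> (\<forall>x. l x = -\<infinity> \<longleftrightarrow> x = 0) \<and>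
     (\<forall>x y. l (x + y) \<le> max (l x) (l y)) \<and>
     (\<forall>c x. c \<noteq> 0 \<longrightarrow> l (s c x) = l x)"

definition strictly_decreasing :: "('v::zero \<Rightarrow> 'v) \<Rightarrow> ('v \<Rightarrow> ereal) \<Rightarrow> bool" where
  "strictly_decreasing d l \<longleftrightarrow> (\<forall>x. x \<noteq> 0 \<longrightarrow> l (d x) < l x)"

definition fsub :: "('v \<Rightarrow> ereal) \<Rightarrow> real \<Rightarrow> 'v set" where
  "fsub l a = {x. l x < ereal a}"

definition has_degree :: "('v \<Rightarrow> ereal) \<Rightarrow> ('w \<Rightarrow> ereal) \<Rightarrow> real \<Rightarrow> ('v \<Rightarrow> 'w) \<Rightarrow> bool" where
  "has_degree l l' e f \<longleftrightarrow> (\<forall>x. l' (f x) \<le> l x + ereal e)"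

definition chain_map ::
  "('k::field \<Rightarrow> 'v::ab_group_add \<Rightarrow> 'v) \<Rightarrow> ('v \<Rightarrow> 'v) \<Rightarrow>
   ('k \<Rightarrow> 'w::ab_group_add \<Rightarrow> 'w) \<Rightarrow> ('w \<Rightarrow> 'w) \<Rightarrow> ('v \<Rightarrow> 'w) \<Rightarrow> bool" where
  "chain_map s d s' d' f \<longleftrightarrow> Vector_Spaces.linear s s' f \<and> (\<forall>x. f (d x) = d' (f x))"

definition filtered_automorphism ::
  "('k::field \<Rightarrow> 'v::ab_group_add \<Rightarrow> 'v) \<Rightarrow> ('v \<Rightarrow> 'v) \<Rightarrow> ('v \<Rightarrow> ereal) \<Rightarrow> ('v \<Rightarrow> 'v) \<Rightarrow> bool" where
  "filtered_automorphism s d l A \<longleftrightarrow>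
     chain_map s d s d A \<and> has_degree l l 0 A \<and>
     (\<exists>B. chain_map s d s d B \<and> has_degree l l 0 B \<and> A \<circ> B = id \<and> B \<circ> A = id)"

definition homotopic_deg ::
  "('k::field \<Rightarrow> 'v::ab_group_add \<Rightarrow> 'v) \<Rightarrow> ('v \<Rightarrow> 'v) \<Rightarrow> ('v \<Rightarrow> ereal) \<Rightarrow> real \<Rightarrow>
   ('v \<Rightarrow> 'v) \<Rightarrow> ('v \<Rightarrow> 'v) \<Rightarrow> bool" where
  "homotopic_deg s d l e f g \<longleftrightarrow>
     (\<exists>K. Vector_Spaces.linear s s K \<and> has_degree l l e K \<and>
          (\<forall>x. f x - g x = d (K x) + K (d x)))"

text \<open>Dimension of the window C^{[a,b)} = C^{<b}/C^{<a} is n: there is a finite set B of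
  n elements of C^{<b} whose classes form a basis of the quotient.\<close>
definition window_basis ::
  "('k::field \<Rightarrow> 'v::ab_group_add \<Rightarrow> 'v) \<Rightarrow> ('v \<Rightarrow> ereal) \<Rightarrow> real \<Rightarrow> real \<Rightarrow> 'v set \<Rightarrow> bool" where
  "window_basis s l a b B \<longleftrightarrow>
     finite B \<and> B \<subseteq> fsub l b \<and>
     (\<forall>c. (\<Sum>v\<in>B. s (c v) v) \<in> fsub l a \<longrightarrow> (\<forall>v\<in>B. c v = 0)) \<and>
     (\<forall>z\<in>fsub l b. \<exists>c. z - (\<Sum>v\<in>B. s (c v) v) \<in> fsub l a)"

definition window_dim ::
  "('k::field \<Rightarrow> 'v::ab_group_add \<Rightarrow> 'v) \<Rightarrow> ('v \<Rightarrow> ereal) \<Rightarrow> real \<Rightarrow> real \<Rightarrow> nat \<Rightarrow> bool" where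
  "window_dim s l a b n \<longleftrightarrow> (\<exists>B. window_basis s l a b B \<and> card B = n)"

text \<open>For a \<le> a', b \<le> b': the map C^{[a,b)} \<rightarrow> C^{[a',b')} induced by inclusion is bijective.\<close>
definition window_map_iso :: "('v::ab_group_add \<Rightarrow> ereal) \<Rightarrow> real \<Rightarrow> real \<Rightarrow> real \<Rightarrow> real \<Rightarrow> bool" where
  "window_map_iso l a b a' b' \<longleftrightarrow>
     (\<forall>x\<in>fsub l b'. \<exists>y\<in>fsub l b. x - y \<in> fsub l a') \<and>
     (\<forall>y\<in>fsub l b. y \<in> fsub l a' \<longrightarrow> y \<in> fsub l a)"

text \<open>C^{[a+\<delta>,a+3\<delta>)} = C^{[a,a+4\<delta>)}: both natural maps out of C^{[a,a+3\<delta>)},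
  to C^{[a+\<delta>,a+3\<delta>)} and to C^{[a,a+4\<delta>)}, are isomorphisms.\<close>
definition windows_equal :: "('v::ab_group_add \<Rightarrow> ereal) \<Rightarrow> real \<Rightarrow> real \<Rightarrow> bool" where
  "windows_equal l a \<delta> \<longleftrightarrow>
     window_map_iso l a (a + 3*\<delta>) (a + \<delta>) (a + 3*\<delta>) \<and>
     window_map_iso l a (a + 3*\<delta>) a (a + 4*\<delta>)"

end

theory Submission
  imports Defs
begin

lemma span2:
  fixes s :: "'k::field \<Rightarrow> 'v::ab_group_add \<Rightarrow> 'v"
  assumes V: "vector_space s" and S: "module.subspace s S"
    and uv: "\<And>p q. s p u + s q v \<in> S \<Longrightarrow> p = 0 \<and> q = 0"
    and xy: "\<And>p q. s p x + s q y \<in> S \<Longrightarrow> p = 0 \<and> q = 0"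
    and hx: "x - (s a1 u + s a2 v) \<in> S" and hy: "y - (s b1 u + s b2 v) \<in> S"
    and hz: "z - (s g1 u + s g2 v) \<in> S"
  shows "\<exists>c1 c2. z - (s c1 x + s c2 y) \<in> S"
proof -
  interpret V: vector_space s by (rule V)
  have key: "s p x + s q y - (s (p*a1+q*b1) u + s (p*a2+q*b2) v) \<in> S" for p q
  proof -
    have "s p x + s q y - (s (p*a1+q*b1) u + s (p*a2+q*b2) v)
        = s p (x - (s a1 u + s a2 v)) + s q (y - (s b1 u + s b2 v))"
      apply (simp only: V.scale_right_diff_distrib V.scale_right_distrib V.scale_left_distrib V.scale_scale)
      apply (simp only: diff_conv_add_uminus minus_add add.assoc)
      apply (simp only: ac_simps)
      done
    also have "\<dots> \<in> S" using V.subspace_add[OF S V.subspace_scale[OF S hx] V.subspace_scale[OF S hy]] .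
    finally show ?thesis .
  qed
  define D where "D = a1*b2 - a2*b1"
  have D: "D \<noteq> 0"
  proof
    assume D0: "D = 0"
    have c1: "b2*a1 + -a2*b1 = 0" and c2: "b2*a2 + -a2*b2 = 0" using D0 unfolding D_def
      by (simp_all add: mult.commute)
    have m1: "s b2 x + s (-a2) y \<in> S"
      using key[of b2 "-a2"] unfolding c1 c2 by simp
    have 1: "a2 = 0" using xy[OF m1] by simp
    have c3: "b1*a1 + -a1*b1 = 0" and c4: "b1*a2 + -a1*b2 = 0" using D0 unfolding D_def
      by (simp_all add: mult.commute)
    have m2: "s b1 x + s (-a1) y \<in> S"
      using key[of b1 "-a1"] unfolding c3 c4 by simp
    have 2: "a1 = 0" using xy[OF m2] by simp
    have m3: "s 1 x + s 0 y \<in> S" using hx 1 2 by simp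
    show False using xy[OF m3] by simp
  qed
  define c1 where "c1 = (g1*b2 - g2*b1)/D"
  define c2 where "c2 = (a1*g2 - a2*g1)/D"
  have e1: "c1*a1+c2*b1 = g1"
  proof -
    have "(g1*b2 - g2*b1)*a1+(a1*g2 - a2*g1)*b1 = g1 * D" unfolding D_def by (simp add: algebra_simps)
    then show ?thesis using D unfolding c1_def c2_def by (simp add: divide_simps)
  qed
  have e2: "c1*a2+c2*b2 = g2"
  proof -
    have "(g1*b2 - g2*b1)*a2+(a1*g2 - a2*g1)*b2 = g2 * D" unfolding D_def by (simp add: algebra_simps)
    then show ?thesis using D unfolding c1_def c2_def by (simp add: divide_simps)
  qed
  have "z - (s c1 x + s c2 y) = (z - (s g1 u + s g2 v)) - (s c1 x + s c2 y - (s (c1*a1+c2*b1) u + s (c1*a2+c2*b2) v))"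
    unfolding e1 e2 by simp
  also have "\<dots> \<in> S" using V.subspace_diff[OF S hz key] .
  finally show ?thesis by blast
qed

lemma ereal_helper: "y \<le> z + ereal e \<Longrightarrow> z < ereal r \<Longrightarrow> r + e \<le> t \<Longrightarrow> y < ereal t"
  by (cases z; cases y) auto

theorem lemma2p3:
  fixes s :: "'k::field \<Rightarrow> 'v::ab_group_add \<Rightarrow> 'v" and d :: "'v \<Rightarrow> 'v" and l :: "'v \<Rightarrow> ereal"
    and s' :: "'k \<Rightarrow> 'w::ab_group_add \<Rightarrow> 'w" and d' :: "'w \<Rightarrow> 'w" and l' :: "'w \<Rightarrow> ereal"
    and \<phi> :: "'v \<Rightarrow> 'w" and \<psi> :: "'w \<Rightarrow> 'v"
    and a \<delta> \<epsilon> :: real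
  assumes C: "filtered_complex s d l" "strictly_decreasing d l"
    and C': "filtered_complex s' d' l'" "strictly_decreasing d' l'"
    and \<delta>: "\<delta> > 0"
    and eq: "windows_equal l a \<delta>"
    and dim1: "window_dim s l (a + \<delta>) (a + 3*\<delta>) 2"
    and dim2: "window_dim s l a (a + 4*\<delta>) 2"
    and zero': "window_dim s' l' a (a + 4*\<delta>) 0"
    and \<phi>: "chain_map s d s' d' \<phi>" "has_degree l l' \<epsilon> \<phi>"
    and \<psi>: "chain_map s' d' s d \<psi>" "has_degree l' l \<epsilon> \<psi>"
    and h1: "\<exists>A. filtered_automorphism s d l A \<and> homotopic_deg s d l \<epsilon> (\<psi> \<circ> \<phi>) A"
    and h2: "\<exists>A. filtered_automorphism s' d' l' A \<and> homotopic_deg s' d' l' \<epsilon> (\<phi> \<circ> \<psi>) A"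
    and \<epsilon>: "\<epsilon> > 0" "\<delta> > \<epsilon>"
  shows "\<exists>x y k. window_basis s l (a + \<delta>) (a + 3*\<delta>) {x, y} \<and> x \<noteq> y \<and> k \<noteq> 0 \<and>
           d x - s k y \<in> fsub l (a + \<delta>)"
proof -
  have VS: "vector_space s" and LD: "Vector_Spaces.linear s s d" and dd: "\<And>x. d (d x) = 0"
    and l0: "\<And>x. l x = -\<infinity> \<longleftrightarrow> x = 0" and lmax: "\<And>x y. l (x + y) \<le> max (l x) (l y)"
    and lsc: "\<And>c x. c \<noteq> 0 \<Longrightarrow> l (s c x) = l x"
    using C(1) unfolding filtered_complex_def by blast+
  have dec: "\<And>x. x \<noteq> 0 \<Longrightarrow> l (d x) < l x" using C(2) unfolding strictly_decreasing_def by blast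
  interpret V: vector_space s by (rule VS)
  interpret D: Vector_Spaces.linear s s d by (rule LD)
  have sub: "V.subspace (fsub l b)" for b
    unfolding V.subspace_def
  proof (intro conjI ballI allI)
    show "0 \<in> fsub l b" using l0[of 0] by (simp add: fsub_def)
  next
    fix x y assume "x \<in> fsub l b" "y \<in> fsub l b"
    then show "x + y \<in> fsub l b" using lmax[of x y] unfolding fsub_def by (simp add: max_def split: if_splits)
  next
    fix c x assume "x \<in> fsub l b"
    then show "s c x \<in> fsub l b" using lsc[of c x] l0[of 0]
      by (cases "c = 0") (auto simp: fsub_def)
  qed
  have dmono: "d x \<in> fsub l b" if "x \<in> fsub l b" for x b
  proof (cases "x = 0")
    case True then show ?thesis using V.subspace_0[OF sub] by simp
  next
    case False then show ?thesis using dec[OF False] that unfolding fsub_def by auto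
  qed
  have fmono: "fsub l b \<subseteq> fsub l b'" if "b \<le> b'" for b b'
    using that unfolding fsub_def by (auto intro: less_le_trans)
  let ?F1 = "fsub l (a + \<delta>)" and ?F3 = "fsub l (a + 3*\<delta>)" and ?Fa = "fsub l a"
  have ex: "\<exists>x\<in>?F3. d x \<notin> ?F1"
  proof (rule ccontr)
    assume "\<not> ?thesis"
    then have H: "\<And>x. x \<in> ?F3 \<Longrightarrow> d x \<in> ?F1" by blast
    have eq1: "\<And>y. y \<in> ?F3 \<Longrightarrow> y \<in> ?F1 \<Longrightarrow> y \<in> ?Fa"
      and eq2: "\<And>x. x \<in> fsub l (a + 4*\<delta>) \<Longrightarrow> \<exists>y\<in>?F3. x - y \<in> ?Fa"
      using eq unfolding windows_equal_def window_map_iso_def by blast+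
    have Ha: "d x \<in> ?Fa" if "x \<in> ?F3" for x
      using eq1[OF dmono[OF that] H[OF that]] .
    obtain B0 where B0: "window_basis s' l' a (a + 4*\<delta>) B0" "card B0 = 0"
      using zero' unfolding window_dim_def by blast
    then have "B0 = {}" unfolding window_basis_def by auto
    then have Z': "\<And>z. z \<in> fsub l' (a + 4*\<delta>) \<Longrightarrow> z \<in> fsub l' a"
      using B0(1) unfolding window_basis_def by auto
    obtain A where A: "filtered_automorphism s d l A" and hA: "homotopic_deg s d l \<epsilon> (\<psi> \<circ> \<phi>) A"
      using h1 by blast
    obtain K where K: "has_degree l l \<epsilon> K" and hom: "\<And>x. (\<psi> \<circ> \<phi>) x - A x = d (K x) + K (d x)"
      using hA unfolding homotopic_deg_def by blast
    obtain Bi where Adeg: "has_degree l l 0 A" and Bideg: "has_degree l l 0 Bi" and BA: "Bi \<circ> A = id"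
      using A unfolding filtered_automorphism_def by blast
    have lA: "l x \<le> l (A x)" for x
    proof -
      have "l x = l (Bi (A x))" using BA by (metis comp_apply id_apply)
      also have "\<dots> \<le> l (A x)" using Bideg unfolding has_degree_def by (metis add.right_neutral zero_ereal_def)
      finally show ?thesis .
    qed
    have all: "x \<in> ?F1" if x: "x \<in> ?F3" for x
    proof -
      have lx: "l x < ereal (a + 3*\<delta>)" using x by (simp add: fsub_def)
      have "\<phi> x \<in> fsub l' (a + 4*\<delta>)"
        using ereal_helper[OF _ lx, of "l' (\<phi> x)" \<epsilon> "a + 4*\<delta>"] \<phi>(2) \<epsilon>
        unfolding has_degree_def fsub_def by auto
      then have "\<phi> x \<in> fsub l' a" by (rule Z')
      then have t1: "\<psi> (\<phi> x) \<in> ?F1"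
        using ereal_helper[of "l (\<psi> (\<phi> x))" "l' (\<phi> x)" \<epsilon> a "a + \<delta>"] \<psi>(2) \<epsilon>
        unfolding has_degree_def fsub_def by auto
      have t2: "K (d x) \<in> ?F1"
        using ereal_helper[of "l (K (d x))" "l (d x)" \<epsilon> a "a + \<delta>"] K \<epsilon> Ha[OF x]
        unfolding has_degree_def fsub_def by auto
      have "K x \<in> fsub l (a + 4*\<delta>)"
        using ereal_helper[OF _ lx, of "l (K x)" \<epsilon> "a + 4*\<delta>"] K \<epsilon>
        unfolding has_degree_def fsub_def by auto
      then obtain y where y: "y \<in> ?F3" "K x - y \<in> ?Fa" using eq2 by blast
      have "d (K x) = d y + d (K x - y)" by (simp add: D.diff)
      also have "\<dots> \<in> ?Fa" using V.subspace_add[OF sub Ha[OF y(1)] dmono[OF y(2)]] .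
      finally have t3: "d (K x) \<in> ?F1" using fmono[of a "a + \<delta>"] \<delta> by auto
      have "A x = \<psi> (\<phi> x) - (d (K x) + K (d x))" using hom[of x] by (simp add: algebra_simps)
      also have "\<dots> \<in> ?F1" using V.subspace_diff[OF sub t1 V.subspace_add[OF sub t3 t2]] .
      finally have "l (A x) < ereal (a + \<delta>)" by (simp add: fsub_def)
      then show ?thesis using lA[of x] by (simp add: fsub_def)
    qed
    obtain B where B: "window_basis s l (a + \<delta>) (a + 3*\<delta>) B" "card B = 2"
      using dim1 unfolding window_dim_def by blast
    then obtain v where v: "v \<in> B" by fastforce
    have fB: "finite B" using B unfolding window_basis_def by blast
    have "(\<Sum>w\<in>B. s (if w = v then 1 else 0) w) = (\<Sum>w\<in>B. if w = v then v else 0)"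
      by (rule sum.cong) auto
    also have "\<dots> = v" using fB v by simp
    finally have sv: "(\<Sum>w\<in>B. s (if w = v then 1 else 0) w) = v" .
    have "v \<in> ?F3" using B v unfolding window_basis_def by blast
    then have vF1: "v \<in> ?F1" by (rule all)
    have ind: "\<And>c. (\<Sum>w\<in>B. s (c w) w) \<in> ?F1 \<Longrightarrow> \<forall>w\<in>B. c w = 0"
      using B(1) unfolding window_basis_def by blast
    have "\<forall>w\<in>B. (if w = v then (1::'k) else 0) = 0"
      by (rule ind) (simp only: sv vF1)
    then have "(if v = v then (1::'k) else 0) = 0" using v by blast
    then show False by simp
  qed
  then obtain x where x: "x \<in> ?F3" and dx: "d x \<notin> ?F1" by blast
  have dx3: "d x \<in> ?F3" using dmono[OF x] .
  have indep: "p = 0 \<and> q = 0" if h: "s p x + s q (d x) \<in> ?F1" for p q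
  proof -
    have "d (s p x + s q (d x)) = s p (d x)" by (simp add: D.add D.scale dd)
    then have "s p (d x) \<in> ?F1" using dmono[OF h] by simp
    then have p: "p = 0" using lsc[of p "d x"] dx by (cases "p = 0") (auto simp: fsub_def)
    then have "s q (d x) \<in> ?F1" using h by simp
    then have "q = 0" using lsc[of q "d x"] dx by (cases "q = 0") (auto simp: fsub_def)
    with p show ?thesis by simp
  qed
  have xne: "x \<noteq> d x"
  proof
    assume "x = d x"
    then have "d x = 0" using dd[of x] by metis
    then show False using dx V.subspace_0[OF sub] by simp
  qed
  obtain B where B: "window_basis s l (a + \<delta>) (a + 3*\<delta>) B" "card B = 2"
    using dim1 unfolding window_dim_def by blast
  then obtain u v where uv: "B = {u, v}" "u \<noteq> v" by (meson card_2_iff)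
  have Bind: "\<And>c. s (c u) u + s (c v) v \<in> ?F1 \<Longrightarrow> c u = 0 \<and> c v = 0"
    and Bsp: "\<And>z. z \<in> ?F3 \<Longrightarrow> \<exists>c. z - (s (c u) u + s (c v) v) \<in> ?F1"
    using B(1) uv unfolding window_basis_def by auto
  have uvind: "p = 0 \<and> q = 0" if "s p u + s q v \<in> ?F1" for p q
    using Bind[of "\<lambda>w. if w = u then p else q"] that uv(2) by auto
  have span: "\<exists>c1 c2. z - (s c1 x + s c2 (d x)) \<in> ?F1" if z: "z \<in> ?F3" for z
  proof -
    obtain cx where hx: "x - (s (cx u) u + s (cx v) v) \<in> ?F1" using Bsp[OF x] by blast
    obtain cy where hy: "d x - (s (cy u) u + s (cy v) v) \<in> ?F1" using Bsp[OF dx3] by blast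
    obtain cz where hz: "z - (s (cz u) u + s (cz v) v) \<in> ?F1" using Bsp[OF z] by blast
    show ?thesis by (rule span2[OF VS sub uvind indep hx hy hz])
  qed
  have wb: "window_basis s l (a + \<delta>) (a + 3*\<delta>) {x, d x}"
    unfolding window_basis_def
  proof (intro conjI allI impI ballI)
    show "finite {x, d x}" by simp
    show "{x, d x} \<subseteq> ?F3" using x dx3 by simp
  next
    fix c assume "(\<Sum>v\<in>{x, d x}. s (c v) v) \<in> ?F1"
    then have "s (c x) x + s (c (d x)) (d x) \<in> ?F1" using xne by simp
    then have "c x = 0 \<and> c (d x) = 0" by (rule indep)
    fix w assume "w \<in> {x, d x}"
    then show "c w = 0" using \<open>c x = 0 \<and> c (d x) = 0\<close> by auto
  next
    fix z assume "z \<in> ?F3"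
    then obtain c1 c2 where h: "z - (s c1 x + s c2 (d x)) \<in> ?F1" using span by blast
    let ?c = "\<lambda>w. if w = x then c1 else c2"
    have "(\<Sum>v\<in>{x, d x}. s (?c v) v) = s c1 x + s c2 (d x)" using xne by simp
    then show "\<exists>c. z - (\<Sum>v\<in>{x, d x}. s (c v) v) \<in> ?F1" using h by metis
  qed
  have "d x - s 1 (d x) \<in> ?F1" using V.subspace_0[OF sub] by simp
  then show ?thesis using wb xne by (intro exI[of _ x] exI[of _ "d x"] exI[of _ 1]) simp
qed

end
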